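(* For every finite set $\Omega$ with $|\Omega|\ge2$ and every $\varepsilon>0$ there exist $\delta>0$ and $n_0>0$ such that for all $n>n_0$ and all $\mu,\mu',\nu,\nu'\in\mathcal P(\Omega^n)$: if $D_\square(\mu,\mu')+D_\square(\nu,\nu')<\delta$, then $D_\square(\mu\otimes\nu,\mu'\otimes\nu')<\varepsilon$, where the product measures are regarded as elements of $\mathcal P((\Omega\times\Omega)^n)$ and the cut metric on the left is taken with spin set $\Omega\times\Omega$.
   Context: $\mathcal P(\mathcal X)$ denotes the set of probability measures on a finite set $\mathcal X$; $[n]=\{1,\dots,n\}$. For $\mu,\nu\in\mathcal P(\Omega^n)$, $\mu\otimes\nu$ is the law of $(\sigma,\tau)$ with $\sigma\sim\mu,\tau\sim\nu$ independent, identified with the configuration $((\sigma_1,\tau_1),\dots,(\sigma_n,\tau_n))\in(\Omega\times\Omega)^n$. For a finite spin set $\Omega$ and $\mu,\nu\in\mathcal P(\Omega^n)$ let $\Gamma(\mu,\nu)$ be the set of couplings, i.e. probability measures $\gamma$ on $\Omega^n\times\Omega^n$ whose first and second marginals are $\mu$ and $\nu$. The cut metric is $D_\square(\mu,\nu)=\frac1n\min_{\gamma\in\Gamma(\mu,\nu)}\max_{I\subset[n],\,B\subset\Omega^n\times\Omega^n,\,\omega\in\Omega}\Big|\sum_{i\in I}\sum_{(\sigma,\tau)\in B}\gamma(\sigma,\tau)\big(\mathbf 1\{\sigma_i=\omega\}-\mathbf 1\{\tau_i=\omega\}\big)\Big|$. *)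

theory Defs
  imports Complex_Main
begin

text \<open>Configurations in Omega^n are lists of length n over the finite type 'a;
  coordinates are indexed by 0..<n (instead of 1..n).\<close>

definition configs :: "nat \<Rightarrow> 'a list set" where
  "configs n = {xs. length xs = n}"

definition is_prob :: "nat \<Rightarrow> ('a::finite list \<Rightarrow> real) \<Rightarrow> bool" where
  "is_prob n \<mu> \<longleftrightarrow> (\<forall>x. 0 \<le> \<mu> x) \<and> (\<forall>x. x \<notin> configs n \<longrightarrow> \<mu> x = 0)
      \<and> (\<Sum>x\<in>configs n. \<mu> x) = 1"

definition couplings :: "nat \<Rightarrow> ('a::finite list \<Rightarrow> real) \<Rightarrow> ('a list \<Rightarrow> real)
    \<Rightarrow> ('a list \<times> 'a list \<Rightarrow> real) set" where
  "couplings n \<mu> \<nu> = {\<gamma>. (\<forall>p. 0 \<le> \<gamma> p)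
      \<and> (\<forall>p. p \<notin> configs n \<times> configs n \<longrightarrow> \<gamma> p = 0)
      \<and> (\<forall>\<sigma>\<in>configs n. (\<Sum>\<tau>\<in>configs n. \<gamma> (\<sigma>, \<tau>)) = \<mu> \<sigma>)
      \<and> (\<forall>\<tau>\<in>configs n. (\<Sum>\<sigma>\<in>configs n. \<gamma> (\<sigma>, \<tau>)) = \<nu> \<tau>)}"

definition cut_value :: "nat \<Rightarrow> ('a::finite list \<times> 'a list \<Rightarrow> real) \<Rightarrow> real" where
  "cut_value n \<gamma> = Max {\<bar>\<Sum>i\<in>I. \<Sum>p\<in>B. \<gamma> p *
        ((if fst p ! i = \<omega> then 1 else 0) - (if snd p ! i = \<omega> then 1 else 0))\<bar>
      | I B \<omega>. I \<subseteq> {0..<n} \<and> B \<subseteq> configs n \<times> configs n}"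

text \<open>Cut metric: (1/n) times the minimum over couplings (written as Inf; the
  minimum is attained by compactness).\<close>

definition cut_dist :: "nat \<Rightarrow> ('a::finite list \<Rightarrow> real) \<Rightarrow> ('a list \<Rightarrow> real) \<Rightarrow> real" where
  "cut_dist n \<mu> \<nu> = (1 / real n) * (INF \<gamma>\<in>couplings n \<mu> \<nu>. cut_value n \<gamma>)"

definition prod_meas :: "nat \<Rightarrow> ('a list \<Rightarrow> real) \<Rightarrow> ('a list \<Rightarrow> real)
    \<Rightarrow> (('a \<times> 'a) list \<Rightarrow> real)" where
  "prod_meas n \<mu> \<nu> = (\<lambda>zs. if length zs = n then \<mu> (map fst zs) * \<nu> (map snd zs) else 0)"

end

theory Submission
  imports Defs
begin


lemma finite_configs: "finite (configs n :: 'a::finite list set)"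
  using finite_lists_length_eq[of "UNIV::'a set" n] by (simp add: configs_def)

definition cset :: "nat \<Rightarrow> ('a::finite list \<times> 'a list \<Rightarrow> real) \<Rightarrow> real set" where
  "cset n \<gamma> = {\<bar>\<Sum>i\<in>I. \<Sum>p\<in>B. \<gamma> p *
        ((if fst p ! i = \<omega> then 1 else 0) - (if snd p ! i = \<omega> then 1 else 0))\<bar>
      | I B \<omega>. I \<subseteq> {0..<n} \<and> B \<subseteq> configs n \<times> configs n}"

lemma cset_finite: "finite (cset n \<gamma>)"
proof -
  let ?g = "\<lambda>(I,B,\<omega>). \<bar>\<Sum>i\<in>I. \<Sum>p\<in>B. \<gamma> p *
        ((if fst p ! i = \<omega> then 1 else 0) - (if snd p ! i = \<omega> then 1 else 0))\<bar>"
  have "cset n \<gamma> \<subseteq> ?g ` (Pow {0..<n} \<times> Pow (configs n \<times> configs n) \<times> UNIV)"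
  proof
    fix x assume "x \<in> cset n \<gamma>"
    then obtain I B \<omega> where "x = ?g (I,B,\<omega>)" "I \<subseteq> {0..<n}" "B \<subseteq> configs n \<times> configs n"
      unfolding cset_def by auto
    then show "x \<in> ?g ` (Pow {0..<n} \<times> Pow (configs n \<times> configs n) \<times> UNIV)" by blast
  qed
  moreover have "finite (Pow {0..<n} \<times> Pow (configs n \<times> configs n :: ('a list \<times> 'a list) set) \<times> (UNIV::'a set))"
    by (auto intro!: finite_cartesian_product finite_configs)
  ultimately show ?thesis using finite_subset by blast
qed

lemma cut_ge:
  assumes "I \<subseteq> {0..<n}" "B \<subseteq> configs n \<times> configs n"
  shows "\<bar>\<Sum>i\<in>I. \<Sum>p\<in>B. \<gamma> p *
        ((if fst p ! i = \<omega> then 1 else 0) - (if snd p ! i = \<omega> then 1 else 0))\<bar> \<le> cut_value n \<gamma>"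
  unfolding cut_value_def
  using Max_ge[OF cset_finite[unfolded cset_def]] assms by blast

lemma cut_nonneg: "0 \<le> cut_value n \<gamma>"
  using cut_ge[of "{}" n "{}" \<gamma>] by simp

lemma cut_le:
  assumes "\<And>I B \<omega>. I \<subseteq> {0..<n} \<Longrightarrow> B \<subseteq> configs n \<times> configs n \<Longrightarrow>
     \<bar>\<Sum>i\<in>I. \<Sum>p\<in>B. \<gamma> p *
        ((if fst p ! i = \<omega> then 1 else 0) - (if snd p ! i = \<omega> then 1 else 0))\<bar> \<le> c"
  shows "cut_value n \<gamma> \<le> c"
proof -
  have ne: "cset n \<gamma> \<noteq> {}" unfolding cset_def by blast
  show ?thesis unfolding cut_value_def cset_def[symmetric]
    using Max_le_iff[OF cset_finite ne] assms unfolding cset_def by blast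
qed

lemma swap_form: "(\<Sum>i\<in>I. \<Sum>p\<in>B. (\<gamma> p::real) * d i p) = (\<Sum>p\<in>B. \<gamma> p * (\<Sum>i\<in>I. d i p))"
  by (simp add: sum_distrib_left) (rule sum.swap)

definition fJ :: "nat set \<Rightarrow> 'a \<Rightarrow> 'a list \<times> 'a list \<Rightarrow> real" where
  "fJ J \<omega> q = (\<Sum>i\<in>J. (if fst q ! i = \<omega> then 1 else 0) - (if snd q ! i = \<omega> then 1 else 0))"

lemma keyL:
  assumes nn: "\<forall>p. 0 \<le> \<gamma> p" and J: "J \<subseteq> {0..<n}"
  shows "(\<Sum>q\<in>configs n \<times> configs n. \<gamma> q * \<bar>fJ J \<omega> q\<bar>) \<le> 2 * cut_value n (\<gamma>::'a::finite list \<times> 'a list \<Rightarrow> real)"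
proof -
  let ?C = "configs n \<times> configs n :: ('a list \<times> 'a list) set"
  let ?P = "?C \<inter> {q. fJ J \<omega> q \<ge> 0}"
  let ?N = "?C \<inter> - {q. fJ J \<omega> q \<ge> 0}"
  have fin: "finite ?C" by (simp add: finite_configs)
  have "(\<Sum>q\<in>?C. \<gamma> q * \<bar>fJ J \<omega> q\<bar>) = (\<Sum>q\<in>?C. if fJ J \<omega> q \<ge> 0 then \<gamma> q * fJ J \<omega> q else - (\<gamma> q * fJ J \<omega> q))"
    by (rule sum.cong) auto
  also have "\<dots> = (\<Sum>q\<in>?P. \<gamma> q * fJ J \<omega> q) + (\<Sum>q\<in>?N. - (\<gamma> q * fJ J \<omega> q))"
    by (rule sum.If_cases) (rule fin)
  finally have eq: "(\<Sum>q\<in>?C. \<gamma> q * \<bar>fJ J \<omega> q\<bar>) = (\<Sum>q\<in>?P. \<gamma> q * fJ J \<omega> q) - (\<Sum>q\<in>?N. \<gamma> q * fJ J \<omega> q)"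
    by (simp add: sum_negf)
  have sw: "\<And>B. (\<Sum>q\<in>B. \<gamma> q * fJ J \<omega> q) = (\<Sum>i\<in>J. \<Sum>p\<in>B. \<gamma> p *
        ((if fst p ! i = \<omega> then 1 else 0) - (if snd p ! i = \<omega> then 1 else 0)))"
    by (simp add: fJ_def swap_form)
  have "\<bar>\<Sum>q\<in>?P. \<gamma> q * fJ J \<omega> q\<bar> \<le> cut_value n \<gamma>"
    unfolding sw by (rule cut_ge[OF J]) blast
  moreover have "\<bar>\<Sum>q\<in>?N. \<gamma> q * fJ J \<omega> q\<bar> \<le> cut_value n \<gamma>"
    unfolding sw by (rule cut_ge[OF J]) blast
  ultimately show ?thesis unfolding eq by linarith
qed

lemma coup_mass:
  assumes "\<gamma> \<in> couplings n \<mu> \<mu>'" "is_prob n \<mu>"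
  shows "(\<Sum>q\<in>configs n \<times> configs n. \<gamma> q) = 1"
proof -
  have "(\<Sum>q\<in>configs n \<times> configs n. \<gamma> q) = (\<Sum>\<sigma>\<in>configs n. \<Sum>\<tau>\<in>configs n. \<gamma> (\<sigma>,\<tau>))"
    by (simp add: sum.cartesian_product case_prod_beta)
  also have "\<dots> = (\<Sum>\<sigma>\<in>configs n. \<mu> \<sigma>)"
    using assms(1) unfolding couplings_def by (intro sum.cong) auto
  finally show ?thesis using assms(2) unfolding is_prob_def by simp
qed

lemma sum_prod_sep:
  "finite A \<Longrightarrow> finite B \<Longrightarrow> (\<Sum>q\<in>A\<times>B. f (fst q) * g (snd q)) = sum f A * (sum g B::real)"
  by (simp add: sum_product sum.cartesian_product split_def)

definition phi :: "('a\<times>'b) list \<Rightarrow> 'a list \<times> 'b list" where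
  "phi zs = (map fst zs, map snd zs)"

lemma phi_bij: "bij_betw phi (configs n) (configs n \<times> configs n)"
  unfolding bij_betw_def
proof
  show "inj_on phi (configs n)"
    by (rule inj_onI) (metis phi_def prod.inject zip_map_fst_snd)
  show "phi ` configs n = configs n \<times> configs n"
  proof
    show "phi ` configs n \<subseteq> configs n \<times> configs n" by (auto simp: phi_def configs_def)
    show "configs n \<times> configs n \<subseteq> phi ` configs n"
    proof
      fix q assume "q \<in> configs n \<times> configs n"
      then obtain a b where q: "q = (a,b)" "length a = n" "length b = n" by (auto simp: configs_def)
      then show "q \<in> phi ` configs n"
        by (intro image_eqI[of _ _ "zip a b"]) (auto simp: phi_def configs_def)
    qed
  qed
qed

definition psi :: "('a\<times>'b) list \<times> ('a\<times>'b) list \<Rightarrow> ('a list \<times> 'a list) \<times> ('b list \<times> 'b list)" where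
  "psi p = ((map fst (fst p), map fst (snd p)), (map snd (fst p), map snd (snd p)))"

lemma psi_bij: "bij_betw psi (configs n \<times> configs n :: ('a\<times>'b) list rel) ((configs n \<times> configs n) \<times> (configs n \<times> configs n))"
  unfolding bij_betw_def
proof
  show "inj_on psi (configs n \<times> configs n :: ('a\<times>'b) list rel)"
    by (rule inj_onI) (metis psi_def prod.inject zip_map_fst_snd prod.collapse)
  show "psi ` (configs n \<times> configs n :: ('a\<times>'b) list rel) = (configs n \<times> configs n) \<times> (configs n \<times> configs n)"
  proof
    show "psi ` (configs n \<times> configs n :: ('a\<times>'b) list rel) \<subseteq> (configs n \<times> configs n) \<times> (configs n \<times> configs n)"
      by (auto simp: psi_def configs_def)
    show "(configs n \<times> configs n) \<times> (configs n \<times> configs n) \<subseteq> psi ` (configs n \<times> configs n :: ('a\<times>'b) list rel)"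
    proof (clarify)
      fix a a' :: "'a list" and b b' :: "'b list"
      assume "a \<in> configs n" "a' \<in> configs n" "b \<in> configs n" "b' \<in> configs n"
      then show "((a,a'),(b,b')) \<in> psi ` (configs n \<times> configs n :: ('a\<times>'b) list rel)"
        by (intro image_eqI[of _ _ "(zip a b, zip a' b')"]) (auto simp: psi_def configs_def)
    qed
  qed
qed



definition prodc :: "nat \<Rightarrow> ('a list \<times> 'a list \<Rightarrow> real) \<Rightarrow> ('b list \<times> 'b list \<Rightarrow> real)
   \<Rightarrow> (('a\<times>'b) list \<times> ('a\<times>'b) list \<Rightarrow> real)" where
  "prodc n g1 g2 = (\<lambda>p. if length (fst p) = n \<and> length (snd p) = n
      then g1 (fst (psi p)) * g2 (snd (psi p)) else 0)"

lemma indep_coupling: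
  assumes "is_prob n \<mu>" "is_prob n \<mu>'"
  shows "(\<lambda>p. \<mu> (fst p) * \<mu>' (snd p)) \<in> couplings n \<mu> \<mu>'"
  using assms unfolding couplings_def is_prob_def
  by (auto simp: sum_distrib_left[symmetric] sum_distrib_right[symmetric])

lemma prodc_coupling:
  fixes \<gamma>1 \<gamma>2 :: "'a::finite list \<times> 'a list \<Rightarrow> real"
  assumes g1: "\<gamma>1 \<in> couplings n \<mu> \<mu>'" and g2: "\<gamma>2 \<in> couplings n \<nu> \<nu>'"
  shows "prodc n \<gamma>1 \<gamma>2 \<in> couplings n (prod_meas n \<mu> \<nu>) (prod_meas n \<mu>' \<nu>')"
proof -
  have fin: "finite (configs n :: 'a list set)" by (rule finite_configs)
  have m1: "(\<Sum>ws\<in>configs n. prodc n \<gamma>1 \<gamma>2 (zs, ws)) = prod_meas n \<mu> \<nu> zs"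
    if zs: "zs \<in> configs n" for zs :: "('a\<times>'a) list"
  proof -
    have "(\<Sum>ws\<in>configs n. prodc n \<gamma>1 \<gamma>2 (zs, ws))
        = (\<Sum>ws\<in>configs n. (\<lambda>q. \<gamma>1 (map fst zs, fst q) * \<gamma>2 (map snd zs, snd q)) (phi ws))"
      using zs by (intro sum.cong) (auto simp: prodc_def psi_def phi_def configs_def)
    also have "\<dots> = (\<Sum>q\<in>configs n \<times> configs n. \<gamma>1 (map fst zs, fst q) * \<gamma>2 (map snd zs, snd q))"
      by (rule sum.reindex_bij_betw[OF phi_bij])
    also have "\<dots> = (\<Sum>a\<in>configs n. \<gamma>1 (map fst zs, a)) * (\<Sum>b\<in>configs n. \<gamma>2 (map snd zs, b))"
      by (rule sum_prod_sep[OF fin fin])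
    also have "\<dots> = \<mu> (map fst zs) * \<nu> (map snd zs)"
      using g1 g2 zs unfolding couplings_def by (auto simp: configs_def)
    finally show ?thesis using zs by (simp add: prod_meas_def configs_def)
  qed
  have m2: "(\<Sum>zs\<in>configs n. prodc n \<gamma>1 \<gamma>2 (zs, ws)) = prod_meas n \<mu>' \<nu>' ws"
    if ws: "ws \<in> configs n" for ws :: "('a\<times>'a) list"
  proof -
    have "(\<Sum>zs\<in>configs n. prodc n \<gamma>1 \<gamma>2 (zs, ws))
        = (\<Sum>zs\<in>configs n. (\<lambda>q. \<gamma>1 (fst q, map fst ws) * \<gamma>2 (snd q, map snd ws)) (phi zs))"
      using ws by (intro sum.cong) (auto simp: prodc_def psi_def phi_def configs_def)
    also have "\<dots> = (\<Sum>q\<in>configs n \<times> configs n. \<gamma>1 (fst q, map fst ws) * \<gamma>2 (snd q, map snd ws))"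
      by (rule sum.reindex_bij_betw[OF phi_bij])
    also have "\<dots> = (\<Sum>a\<in>configs n. \<gamma>1 (a, map fst ws)) * (\<Sum>b\<in>configs n. \<gamma>2 (b, map snd ws))"
      by (rule sum_prod_sep[OF fin fin])
    also have "\<dots> = \<mu>' (map fst ws) * \<nu>' (map snd ws)"
      using g1 g2 ws unfolding couplings_def by (auto simp: configs_def)
    finally show ?thesis using ws by (simp add: prod_meas_def configs_def)
  qed
  have nn: "\<forall>p. 0 \<le> prodc n \<gamma>1 \<gamma>2 p"
  proof
    fix p
    have "\<forall>p. 0 \<le> \<gamma>1 p" "\<forall>p. 0 \<le> \<gamma>2 p" using g1 g2 unfolding couplings_def by blast+
    then have "0 \<le> \<gamma>1 (fst (psi p)) * \<gamma>2 (snd (psi p))" by (simp del: split_paired_All)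
    then show "0 \<le> prodc n \<gamma>1 \<gamma>2 p" unfolding prodc_def by simp
  qed
  have supp: "\<forall>p. p \<notin> configs n \<times> configs n \<longrightarrow> prodc n \<gamma>1 \<gamma>2 p = 0"
    by (auto simp: prodc_def configs_def)
  show ?thesis unfolding couplings_def using nn supp m1 m2 by blast
qed



lemma split_F:
  assumes "finite I"
  shows "(\<Sum>i\<in>I. (if a i \<and> b i then 1 else 0) - (if a' i \<and> b' i then 1 else 0 :: real))
    = (\<Sum>i\<in>{i\<in>I. a i}. (if b i then 1 else 0) - (if b' i then 1 else 0))
    + (\<Sum>i\<in>{i\<in>I. b' i}. (if a i then 1 else 0) - (if a' i then 1 else 0))"
  unfolding sum.inter_filter[OF assms] sum.distrib[symmetric]
  by (rule sum.cong) auto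

lemma prod_bound:
  fixes \<gamma>1 \<gamma>2 :: "'a::finite list \<times> 'a list \<Rightarrow> real"
  assumes g1: "\<gamma>1 \<in> couplings n \<mu> \<mu>'" and g2: "\<gamma>2 \<in> couplings n \<nu> \<nu>'"
    and pm: "is_prob n \<mu>" "is_prob n \<nu>"
  shows "cut_value n (prodc n \<gamma>1 \<gamma>2) \<le> 2 * (cut_value n \<gamma>1 + cut_value n \<gamma>2)"
proof (rule cut_le)
  fix I and B :: "(('a\<times>'a) list \<times> ('a\<times>'a) list) set" and \<omega> :: "'a\<times>'a"
  assume I: "I \<subseteq> {0..<n}" and B: "B \<subseteq> configs n \<times> configs n"
  obtain \<omega>1 \<omega>2 where om: "\<omega> = (\<omega>1,\<omega>2)" by (cases \<omega>)
  let ?C = "configs n :: 'a list set"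
  let ?CC = "configs n :: ('a\<times>'a) list set"
  define \<Gamma> where "\<Gamma> = prodc n \<gamma>1 \<gamma>2"
  have finI: "finite I" using I finite_subset by blast
  have finC: "finite ?C" by (rule finite_configs)
  have finCC: "finite (?CC \<times> ?CC)" using finite_configs by blast
  have nn1: "\<forall>p. 0 \<le> \<gamma>1 p" and nn2: "\<forall>p. 0 \<le> \<gamma>2 p" using g1 g2 unfolding couplings_def by blast+
  have nnG: "0 \<le> \<Gamma> p" for p
  proof -
    have "0 \<le> \<gamma>1 (fst (psi p)) * \<gamma>2 (snd (psi p))" using nn1 nn2 by (simp del: split_paired_All)
    then show ?thesis unfolding \<Gamma>_def prodc_def by simp
  qed
  define F where "F p = (\<Sum>i\<in>I. (if fst p ! i = \<omega> then 1 else 0) - (if snd p ! i = \<omega> then 1 else 0 :: real))"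
    for p :: "('a\<times>'a) list \<times> ('a\<times>'a) list"
  define F' where "F' q = (\<Sum>i\<in>I. (if fst (fst q) ! i = \<omega>1 \<and> fst (snd q) ! i = \<omega>2 then 1 else 0)
      - (if snd (fst q) ! i = \<omega>1 \<and> snd (snd q) ! i = \<omega>2 then 1 else 0 :: real))"
    for q :: "('a list \<times> 'a list) \<times> ('a list \<times> 'a list)"
  define J1 where "J1 q1 = {i\<in>I. fst q1 ! i = \<omega>1}" for q1 :: "'a list \<times> 'a list"
  define J2 where "J2 q2 = {i\<in>I. snd q2 ! i = \<omega>2}" for q2 :: "'a list \<times> 'a list"
  have FF: "F p = F' (psi p)" if p: "p \<in> ?CC \<times> ?CC" for p
    unfolding F_def F'_def
  proof (rule sum.cong)
    fix i assume "i \<in> I"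
    then have "i < n" using I by auto
    moreover have "length (fst p) = n" "length (snd p) = n" using p by (auto simp: configs_def)
    ultimately show "(if fst p ! i = \<omega> then 1 else 0) - (if snd p ! i = \<omega> then 1 else 0 :: real) =
      (if fst (fst (psi p)) ! i = \<omega>1 \<and> fst (snd (psi p)) ! i = \<omega>2 then 1 else 0) -
      (if snd (fst (psi p)) ! i = \<omega>1 \<and> snd (snd (psi p)) ! i = \<omega>2 then 1 else 0)"
      by (simp add: psi_def om prod_eq_iff)
  qed simp
  have GG: "\<Gamma> p = \<gamma>1 (fst (psi p)) * \<gamma>2 (snd (psi p))" if p: "p \<in> ?CC \<times> ?CC" for p
    using p by (auto simp: \<Gamma>_def prodc_def configs_def)
  have FS: "F' (q1,q2) = fJ (J1 q1) \<omega>2 q2 + fJ (J2 q2) \<omega>1 q1" for q1 q2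
    unfolding F'_def fJ_def J1_def J2_def by (simp add: split_F[OF finI])
  have mass1: "(\<Sum>q\<in>?C\<times>?C. \<gamma>1 q) = 1" by (rule coup_mass[OF g1 pm(1)])
  have mass2: "(\<Sum>q\<in>?C\<times>?C. \<gamma>2 q) = 1" by (rule coup_mass[OF g2 pm(2)])
  have J1s: "J1 q1 \<subseteq> {0..<n}" for q1 using I by (auto simp: J1_def)
  have J2s: "J2 q2 \<subseteq> {0..<n}" for q2 using I by (auto simp: J2_def)

  have "\<bar>\<Sum>i\<in>I. \<Sum>p\<in>B. \<Gamma> p * ((if fst p ! i = \<omega> then 1 else 0) - (if snd p ! i = \<omega> then 1 else 0))\<bar>
      = \<bar>\<Sum>p\<in>B. \<Gamma> p * F p\<bar>" by (simp add: swap_form F_def)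
  also have "\<dots> \<le> (\<Sum>p\<in>B. \<Gamma> p * \<bar>F p\<bar>)"
    by (rule order_trans[OF sum_abs]) (simp add: abs_mult nnG)
  also have "\<dots> \<le> (\<Sum>p\<in>?CC \<times> ?CC. \<Gamma> p * \<bar>F p\<bar>)"
    by (rule sum_mono2[OF finCC B]) (simp add: nnG)
  also have "\<dots> = (\<Sum>p\<in>?CC \<times> ?CC. (\<lambda>q. \<gamma>1 (fst q) * \<gamma>2 (snd q) * \<bar>F' q\<bar>) (psi p))"
    by (rule sum.cong) (simp_all add: FF GG)
  also have "\<dots> = (\<Sum>q\<in>(?C \<times> ?C) \<times> (?C \<times> ?C). \<gamma>1 (fst q) * \<gamma>2 (snd q) * \<bar>F' q\<bar>)"
    by (rule sum.reindex_bij_betw[OF psi_bij])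
  also have "\<dots> = (\<Sum>q1\<in>?C \<times> ?C. \<Sum>q2\<in>?C \<times> ?C. \<gamma>1 q1 * \<gamma>2 q2 * \<bar>F' (q1,q2)\<bar>)"
    by (simp add: sum.cartesian_product split_def)
  also have "\<dots> \<le> (\<Sum>q1\<in>?C \<times> ?C. \<Sum>q2\<in>?C \<times> ?C. \<gamma>1 q1 * (\<gamma>2 q2 * \<bar>fJ (J1 q1) \<omega>2 q2\<bar>)
        + \<gamma>2 q2 * (\<gamma>1 q1 * \<bar>fJ (J2 q2) \<omega>1 q1\<bar>))"
  proof (intro sum_mono)
    fix q1 q2
    have "\<gamma>1 q1 * \<gamma>2 q2 * \<bar>F' (q1,q2)\<bar> \<le> \<gamma>1 q1 * \<gamma>2 q2 * (\<bar>fJ (J1 q1) \<omega>2 q2\<bar> + \<bar>fJ (J2 q2) \<omega>1 q1\<bar>)"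
      unfolding FS by (rule mult_left_mono) (auto simp: nn1 nn2)
    then show "\<gamma>1 q1 * \<gamma>2 q2 * \<bar>F' (q1,q2)\<bar> \<le> \<gamma>1 q1 * (\<gamma>2 q2 * \<bar>fJ (J1 q1) \<omega>2 q2\<bar>)
        + \<gamma>2 q2 * (\<gamma>1 q1 * \<bar>fJ (J2 q2) \<omega>1 q1\<bar>)" by (simp add: algebra_simps)
  qed
  also have "\<dots> = (\<Sum>q1\<in>?C \<times> ?C. \<gamma>1 q1 * (\<Sum>q2\<in>?C \<times> ?C. \<gamma>2 q2 * \<bar>fJ (J1 q1) \<omega>2 q2\<bar>))
      + (\<Sum>q2\<in>?C \<times> ?C. \<gamma>2 q2 * (\<Sum>q1\<in>?C \<times> ?C. \<gamma>1 q1 * \<bar>fJ (J2 q2) \<omega>1 q1\<bar>))"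
    by (simp add: sum.distrib sum_distrib_left sum.swap[of "\<lambda>q1 q2. \<gamma>2 q2 * (\<gamma>1 q1 * \<bar>fJ (J2 q2) \<omega>1 q1\<bar>)"])
  also have "\<dots> \<le> (\<Sum>q1\<in>?C \<times> ?C. \<gamma>1 q1 * (2 * cut_value n \<gamma>2))
      + (\<Sum>q2\<in>?C \<times> ?C. \<gamma>2 q2 * (2 * cut_value n \<gamma>1))"
    by (intro add_mono sum_mono mult_left_mono keyL nn1 nn2 J1s J2s, simp_all add: nn1 nn2)
  also have "\<dots> = 2 * (cut_value n \<gamma>1 + cut_value n \<gamma>2)"
    by (simp add: sum_distrib_right[symmetric] mass1 mass2)
  finally show "\<bar>\<Sum>i\<in>I. \<Sum>p\<in>B. prodc n \<gamma>1 \<gamma>2 p * ((if fst p ! i = \<omega> then 1 else 0) - (if snd p ! i = \<omega> then 1 else 0))\<bar>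
      \<le> 2 * (cut_value n \<gamma>1 + cut_value n \<gamma>2)" unfolding \<Gamma>_def .
qed



theorem lemma2p11:
  fixes \<epsilon> :: real
  assumes "card (UNIV :: 'a::finite set) \<ge> 2"
    and "\<epsilon> > 0"
  shows "\<exists>\<delta>>0. \<exists>n0::nat>0. \<forall>n>n0. \<forall>\<mu> \<mu>' \<nu> \<nu>' :: 'a list \<Rightarrow> real.
           is_prob n \<mu> \<and> is_prob n \<mu>' \<and> is_prob n \<nu> \<and> is_prob n \<nu>' \<longrightarrow>
           cut_dist n \<mu> \<mu>' + cut_dist n \<nu> \<nu>' < \<delta> \<longrightarrow>
           cut_dist n (prod_meas n \<mu> \<nu>) (prod_meas n \<mu>' \<nu>') < \<epsilon>"
proof (intro exI[of _ "\<epsilon>/2"] conjI exI[of _ "1::nat"] allI impI)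
  show "\<epsilon>/2 > 0" using assms by simp
  show "(0::nat) < 1" by simp
  fix n :: nat and \<mu> \<mu>' \<nu> \<nu>' :: "'a list \<Rightarrow> real"
  assume n: "1 < n"
    and P: "is_prob n \<mu> \<and> is_prob n \<mu>' \<and> is_prob n \<nu> \<and> is_prob n \<nu>'"
    and D: "cut_dist n \<mu> \<mu>' + cut_dist n \<nu> \<nu>' < \<epsilon>/2"
  have npos: "real n > 0" using n by simp
  define a where "a = (INF \<gamma>\<in>couplings n \<mu> \<mu>'. cut_value n \<gamma>)"
  define b where "b = (INF \<gamma>\<in>couplings n \<nu> \<nu>'. cut_value n \<gamma>)"
  have ab: "a + b < \<epsilon> * n / 2"
    using D npos unfolding cut_dist_def a_def[symmetric] b_def[symmetric]
    by (simp add: field_simps)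
  define \<eta> where "\<eta> = (\<epsilon> * n / 2 - (a + b)) / 4"
  have eta: "\<eta> > 0" using ab by (simp add: \<eta>_def)
  have ne1: "cut_value n ` couplings n \<mu> \<mu>' \<noteq> {}"
    using indep_coupling[of n \<mu> \<mu>'] P by blast
  have ne2: "cut_value n ` couplings n \<nu> \<nu>' \<noteq> {}"
    using indep_coupling[of n \<nu> \<nu>'] P by blast
  obtain \<gamma>1 where g1: "\<gamma>1 \<in> couplings n \<mu> \<mu>'" and c1: "cut_value n \<gamma>1 < a + \<eta>"
    using cInf_lessD[OF ne1, of "a + \<eta>"] eta unfolding a_def by auto
  obtain \<gamma>2 where g2: "\<gamma>2 \<in> couplings n \<nu> \<nu>'" and c2: "cut_value n \<gamma>2 < b + \<eta>"
    using cInf_lessD[OF ne2, of "b + \<eta>"] eta unfolding b_def by auto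
  have pc: "prodc n \<gamma>1 \<gamma>2 \<in> couplings n (prod_meas n \<mu> \<nu>) (prod_meas n \<mu>' \<nu>')"
    by (rule prodc_coupling[OF g1 g2])
  have bdd: "bdd_below (cut_value n ` couplings n (prod_meas n \<mu> \<nu>) (prod_meas n \<mu>' \<nu>'))"
    by (rule bdd_belowI[of _ 0]) (auto simp: cut_nonneg)
  have "(INF \<gamma>\<in>couplings n (prod_meas n \<mu> \<nu>) (prod_meas n \<mu>' \<nu>'). cut_value n \<gamma>)
      \<le> cut_value n (prodc n \<gamma>1 \<gamma>2)"
    by (rule cInf_lower[OF imageI[OF pc] bdd])
  also have "\<dots> \<le> 2 * (cut_value n \<gamma>1 + cut_value n \<gamma>2)"
    using prod_bound[OF g1 g2] P by blast
  also have "\<dots> < 2 * (a + b + 2 * \<eta>)" using c1 c2 by simp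
  also have "\<dots> = \<epsilon> * n / 2 + (a + b)" by (simp add: \<eta>_def field_simps)
  also have "\<dots> < \<epsilon> * n" using ab by simp
  finally have "(INF \<gamma>\<in>couplings n (prod_meas n \<mu> \<nu>) (prod_meas n \<mu>' \<nu>'). cut_value n \<gamma>) < \<epsilon> * n" .
  then show "cut_dist n (prod_meas n \<mu> \<nu>) (prod_meas n \<mu>' \<nu>') < \<epsilon>"
    unfolding cut_dist_def using npos by (simp add: field_simps)
qed


end
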